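(* For every $i\ge 1$, the sequence $\mathcal S_{4i+2,3}$ is a valid sequence of $2i+1$ Berge $3$-moves starting from the alternating string of $n=4i+2$ pegs. Every move is legal: its source positions are occupied and its destination positions are empty at the time of the move. After the last move the configuration is sorted; more precisely: (i) the pegs occupy exactly the positions $4,5,\dots,n+3$, i.e. the string has been shifted three places to the right overall; (ii) the $\lceil n/2\rceil$ white pegs lie to the left of the $\lfloor n/2\rfloor$ black pegs.
   Context: Pegs sit in holes of a one-dimensional board whose holes are indexed by all integers; each hole holds at most one peg, and each peg is white or black. The alternating string of $n$ pegs is the configuration in which positions $1,\dots,n$ are occupied, position $i$ holding a white peg if $i$ is odd and a black peg if $i$ is even, and every other hole is empty. A Berge $3$-move $\{\,j\ i\,\}$ is allowed when positions $i,i+1,i+2$ are occupied and positions $j,j+1,j+2$ are empty. It moves the peg in position $i+t$ to position $j+t$ for $t=0,1,2$. A sequence is written as a list of integers $\{a_1\ a_2\ \dots\ a_m\}$, which denotes the moves $\{a_1\ a_2\},\{a_2\ a_3\},\dots,\{a_{m-1}\ a_m\}$ performed in this order. Concatenation of two such lists with $\cup$ means performing the first list of moves and then the second. The sequences $\mathcal S_{4i+2,3}$ are defined recursively. - $\mathcal S_{6,3}=\{7\ 2\ 6\ 1\}$, i.e. the moves $\{7\ 2\},\{2\ 6\},\{6\ 1\}$. - For $i\ge 2$, let $\mathcal S_{4i-2,3}=\{a_1\ \dots\ a_{2i}\}$ and define $\phi(x)=x+2$ if $x\le 2i$ and $\phi(x)=x+4$ if $x\ge 2i+1$. Then $\mathcal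 S_{4i+2,3}=\{\phi(a_1)\ \phi(a_2)\ \dots\ \phi(a_{2i})\}\cup\{3\ \ 2i+4\ \ 1\}$. For example, $\mathcal S_{10,3}=\{11\ 4\ 10\ 3\ 8\ 1\}$ and $\mathcal S_{14,3}=\{15\ 6\ 14\ 5\ 12\ 3\ 10\ 1\}$. *)

theory Defs
  imports Main
begin

datatype peg = White | Black

type_synonym config = "int \<Rightarrow> peg option"

definition alt :: "nat \<Rightarrow> config" where
  "alt n = (\<lambda>p. if 1 \<le> p \<and> p \<le> int n then Some (if odd p then White else Black) else None)"

definition move_legal :: "int \<Rightarrow> int \<Rightarrow> config \<Rightarrow> bool" where
  "move_legal j i c \<longleftrightarrow> (\<forall>t::int. 0 \<le> t \<and> t \<le> 2 \<longrightarrow> c (i + t) \<noteq> None \<and> c (j + t) = None)"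

definition move_apply :: "int \<Rightarrow> int \<Rightarrow> config \<Rightarrow> config" where
  "move_apply j i c = (\<lambda>p. if j \<le> p \<and> p \<le> j + 2 then c (i + (p - j))
                          else if i \<le> p \<and> p \<le> i + 2 then None else c p)"

fun run :: "(int \<times> int) list \<Rightarrow> config \<Rightarrow> config option" where
  "run [] c = Some c"
| "run ((j, i) # ms) c = (if move_legal j i c then run ms (move_apply j i c) else None)"

text \<open>The list {a1 ... am} denotes moves {a1 a2}, ..., {a(m-1) am}.\<close>
definition moves_of :: "int list \<Rightarrow> (int \<times> int) list" where
  "moves_of xs = zip xs (tl xs)"

text \<open>The moves of the phi-image
  {phi(a1) ... phi(a_{2i})} are the phi-images of the moves {a_k a_(k+1)} of S_{4i-2,3};
  they are followed (union) by the moves of {3, 2i+4, 1}.\<close>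
fun movesS :: "nat \<Rightarrow> (int \<times> int) list" where
  "movesS 0 = []"
| "movesS (Suc 0) = moves_of [7, 2, 6, 1]"
| "movesS (Suc (Suc k)) =
     (let i = int k + 2; \<phi> = (\<lambda>x::int. if x \<le> 2 * i then x + 2 else x + 4) in
      map (\<lambda>(a, b). (\<phi> a, \<phi> b)) (movesS (Suc k)) @ moves_of [3, 2 * i + 4, 1])"

end

theory Submission
  imports Defs
begin

lemma all3: "(\<forall>t::int. 0 \<le> t \<and> t \<le> 2 \<longrightarrow> P t) \<longleftrightarrow> P 0 \<and> P 1 \<and> P 2"
proof -
  have "\<And>t::int. 0 \<le> t \<and> t \<le> 2 \<Longrightarrow> t = 0 \<or> t = 1 \<or> t = 2" by arith
  then show ?thesis by auto
qed

definition colr :: "int \<Rightarrow> peg" where "colr p = (if odd p then White else Black)"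

definition st :: "nat \<Rightarrow> nat \<Rightarrow> config" where
  "st i k = (\<lambda>p. let I = int i; K = int k in
     if (1 \<le> p \<and> p \<le> 2*(I-K)) \<or> (2*I+4 \<le> p \<and> p \<le> 4*I+1-2*K) then Some (colr p)
     else if p = 2*(I-K)+1 then Some Black
     else if 2*(I-K)+2 \<le> p \<and> p \<le> 2*I+3 then Some White
     else if 4*I+5-2*K \<le> p \<and> p \<le> 4*I+5 then Some Black else None)"

definition fin :: "nat \<Rightarrow> config" where
  "fin i = (\<lambda>p. if 4 \<le> p \<and> p \<le> 2*int i+4 then Some White
     else if 2*int i+5 \<le> p \<and> p \<le> 4*int i+5 then Some Black else None)"

function R :: "nat \<Rightarrow> nat \<Rightarrow> (int \<times> int) list" where
  "R i k = (if i \<le> Suc k then [(2*int i+4, 1)]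
     else [(4*int i+2-2*int k, 2*int i-1-2*int k), (2*int i-1-2*int k, 4*int i-2*int k)] @ R i (Suc k))"
  by auto
termination by (relation "measure (\<lambda>(i,k). i - k)") auto

declare R.simps[simp del]

definition Q :: "nat \<Rightarrow> (int \<times> int) list" where
  "Q i = [(4*int i+3, 2*int i), (2*int i, 4*int i+2)] @ R i 0"

lemma run_append: "run (xs @ ys) c = (case run xs c of None \<Rightarrow> None | Some c' \<Rightarrow> run ys c')"
  by (induction xs c rule: run.induct) auto

lemma step_pair:
  assumes "Suc k < i"
  shows "run [(4*int i+2-2*int k, 2*int i-1-2*int k), (2*int i-1-2*int k, 4*int i-2*int k)] (st i k)
         = Some (st i (Suc k))"
proof -
  have l1: "move_legal (4*int i+2-2*int k) (2*int i-1-2*int k) (st i k)"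
    using assms unfolding move_legal_def all3 st_def Let_def by simp
  have l2: "move_legal (2*int i-1-2*int k) (4*int i-2*int k) (move_apply (4*int i+2-2*int k) (2*int i-1-2*int k) (st i k))"
    using assms unfolding move_legal_def all3 st_def Let_def move_apply_def by simp
  have e: "move_apply (2*int i-1-2*int k) (4*int i-2*int k) (move_apply (4*int i+2-2*int k) (2*int i-1-2*int k) (st i k)) = st i (Suc k)"
  proof
    fix p
    show "move_apply (2*int i-1-2*int k) (4*int i-2*int k) (move_apply (4*int i+2-2*int k) (2*int i-1-2*int k) (st i k)) p = st i (Suc k) p"
      using assms unfolding move_apply_def st_def Let_def colr_def
      by (auto simp: even_add; presburger)
  qed
  show ?thesis using l1 l2 e by simp
qed

lemma step_last:
  assumes "i \<ge> 1"
  shows "run [(2*int i+4, 1)] (st i (i - 1)) = Some (fin i)"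
proof -
  have k: "int (i - 1) = int i - 1" using assms by simp
  have l1: "move_legal (2*int i+4) 1 (st i (i - 1))"
    using assms unfolding move_legal_def all3 st_def Let_def k by simp
  have e: "move_apply (2*int i+4) 1 (st i (i - 1)) = fin i"
  proof
    fix p
    show "move_apply (2*int i+4) 1 (st i (i - 1)) p = fin i p"
      using assms unfolding move_apply_def st_def Let_def colr_def fin_def k
      by (auto simp: even_add; presburger)
  qed
  show ?thesis using l1 e by simp
qed

lemma step_first:
  assumes "i \<ge> 1"
  shows "run [(4*int i+3, 2*int i), (2*int i, 4*int i+2)] (alt (4*i+2)) = Some (st i 0)"
proof -
  have l1: "move_legal (4*int i+3) (2*int i) (alt (4*i+2))"
    using assms unfolding move_legal_def all3 alt_def by simp
  have l2: "move_legal (2*int i) (4*int i+2) (move_apply (4*int i+3) (2*int i) (alt (4*i+2)))"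
    using assms unfolding move_legal_def all3 alt_def move_apply_def by simp
  have e: "move_apply (2*int i) (4*int i+2) (move_apply (4*int i+3) (2*int i) (alt (4*i+2))) = st i 0"
  proof
    fix p
    show "move_apply (2*int i) (4*int i+2) (move_apply (4*int i+3) (2*int i) (alt (4*i+2))) p = st i 0 p"
      using assms unfolding alt_def move_apply_def st_def Let_def colr_def
      by (auto simp: even_add; presburger)
  qed
  show ?thesis using l1 l2 e by simp
qed

lemma run_R: "k < i \<Longrightarrow> run (R i k) (st i k) = Some (fin i)"
proof (induction i k rule: R.induct)
  case (1 i k)
  show ?case
  proof (cases "i \<le> Suc k")
    case True
    have e: "R i k = [(2*int i+4, 1)]" using True by (simp add: R.simps[of i k])
    have "i \<ge> 1" using 1 by simp
    then have s: "run [(2*int i+4, 1)] (st i (i - 1)) = Some (fin i)" by (rule step_last)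
    have "i - 1 = k" using 1 True by simp
    then show ?thesis using s e by metis
  next
    case False
    have e: "R i k = [(4*int i+2-2*int k, 2*int i-1-2*int k), (2*int i-1-2*int k, 4*int i-2*int k)] @ R i (Suc k)"
      using False by (simp add: R.simps[of i k])
    have "Suc k < i" using False by simp
    then show ?thesis unfolding e run_append using 1 False step_pair[of k i]
      by (simp del: run.simps)
  qed
qed

lemma map_R:
  assumes "k < i"
  shows "map (\<lambda>(a, b). ((\<lambda>x::int. if x \<le> 2 * int (Suc i) then x + 2 else x + 4) a,
                        (\<lambda>x::int. if x \<le> 2 * int (Suc i) then x + 2 else x + 4) b)) (R i k)
         @ moves_of [3, 2 * int (Suc i) + 4, 1] = R (Suc i) k"
  using assms
proof (induction i k rule: R.induct)
  case (1 i k)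
  show ?case
  proof (cases "i \<le> Suc k")
    case True
    have e: "R i k = [(2*int i+4, 1)]" using True by (simp add: R.simps[of i k])
    have e2: "R (Suc i) k = [(4*int (Suc i)+2-2*int k, 2*int (Suc i)-1-2*int k), (2*int (Suc i)-1-2*int k, 4*int (Suc i)-2*int k)] @ R (Suc i) (Suc k)"
      using True 1 by (simp add: R.simps[of "Suc i" k])
    have e3: "R (Suc i) (Suc k) = [(2*int (Suc i)+4, 1)]" using True by (simp add: R.simps[of "Suc i" "Suc k"])
    have "int k = int i - 1" using 1 True by simp
    then show ?thesis by (simp add: e e2 e3 moves_of_def)
  next
    case False
    then show ?thesis using 1
      by (simp add: R.simps[of i k] R.simps[of "Suc i" k])
  qed
qed

lemma movesS_Q: "i \<ge> 1 \<Longrightarrow> movesS i = Q i"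
proof (induction i rule: movesS.induct)
  case 1 then show ?case by simp
next
  case 2 then show ?case by (simp add: Q_def moves_of_def R.simps[of "Suc 0" 0])
next
  case (3 k)
  have "movesS (Suc (Suc k)) = map (\<lambda>(a, b). ((\<lambda>x::int. if x \<le> 2 * int (Suc (Suc k)) then x + 2 else x + 4) a,
                        (\<lambda>x::int. if x \<le> 2 * int (Suc (Suc k)) then x + 2 else x + 4) b)) (Q (Suc k))
         @ moves_of [3, 2 * int (Suc (Suc k)) + 4, 1]"
    using 3 by (simp add: Let_def add.commute)
  also have "\<dots> = Q (Suc (Suc k))"
    using map_R[of 0 "Suc k"] by (simp add: Q_def)
  finally show ?case .
qed

theorem lemma3:
  fixes i :: nat
  assumes "i \<ge> 1"
  defines "n \<equiv> 4 * i + 2"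
  shows "length (movesS i) = 2 * i + 1 \<and>
         (\<exists>c. run (movesS i) (alt n) = Some c \<and>
              {p. c p \<noteq> None} = {4 .. int n + 3} \<and>
              card {p. c p = Some White} = (n + 1) div 2 \<and>
              card {p. c p = Some Black} = n div 2 \<and>
              (\<forall>p q. c p = Some White \<and> c q = Some Black \<longrightarrow> p < q))"
  proof -
  have len: "k < j \<Longrightarrow> length (R j k) = 2*(j-k) - 1" for j k
  proof (induction j k rule: R.induct)
    case (1 j k)
    show ?case
    proof (cases "j \<le> Suc k")
      case True
      then show ?thesis using 1 by (simp add: R.simps[of j k])
    next
      case False
      then show ?thesis using 1 by (simp add: R.simps[of j k])
    qed
  qed
  have mq: "movesS i = Q i" using assms(1) by (rule movesS_Q)
  have L: "length (movesS i) = 2 * i + 1"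
    using mq len[of 0 i] assms(1) by (simp add: Q_def)
  have r: "run (movesS i) (alt n) = Some (fin i)"
    unfolding mq Q_def run_append n_def using step_first[OF assms(1)] run_R[of 0 i] assms(1)
    by (simp del: run.simps)
  have s1: "{p. fin i p \<noteq> None} = {4 .. int n + 3}"
    unfolding n_def by (auto simp: fin_def)
  have w: "{p. fin i p = Some White} = {4 .. 2*int i+4}"
    by (auto simp: fin_def)
  have b: "{p. fin i p = Some Black} = {2*int i+5 .. 4*int i+5}"
    by (auto simp: fin_def)
  have c1: "card {p. fin i p = Some White} = (n + 1) div 2"
    unfolding w n_def by simp
  have c2: "card {p. fin i p = Some Black} = n div 2"
    unfolding b n_def by simp
  have o: "\<forall>p q. fin i p = Some White \<and> fin i q = Some Black \<longrightarrow> p < q"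
    by (auto simp: fin_def split: if_splits)
  show ?thesis using L r s1 c1 c2 o by blast
qed


end
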